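(* Let $G$ be a finite simple graph on $[n]$, $w:E(G)\to\mathbb Z_{>0}$ a weight function, $\Bbbk$ a field, $S=\Bbbk[x_1,\ldots,x_n]$ and $I(G_w)=\big((x_ix_j)^{w(i,j)}\mid\{i,j\}\in E(G)\big)$. Assume $J=\sqrt{I(G_w):x^{\mathbf a}}$ is an associated radical of $I(G_w)$ and $K$ is an associated radical of $J$. Then $K$ is also an associated radical of $I(G_w)$.
   Context: For a monomial ideal $I$, an associated radical of $I$ is an ideal of the form $\sqrt{I:f}$ with $f$ a monomial not in $I$. *)

theory Defs
  imports "HOL-Library.Poly_Mapping"
begin

text \<open>With 'v a finite type with n elements and 'k a field this is k[x_1,...,x_n].\<close>
type_synonym ('v, 'k) mpoly = "('v \<Rightarrow>\<^sub>0 nat) \<Rightarrow>\<^sub>0 'k"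

definition monom :: "('v \<Rightarrow>\<^sub>0 nat) \<Rightarrow> ('v, 'k::comm_ring_1) mpoly" where
  "monom a = Poly_Mapping.single a 1"

definition ideal_gen :: "('v, 'k::comm_ring_1) mpoly set \<Rightarrow> ('v, 'k) mpoly set" where
  "ideal_gen G = {p. \<exists>F r. finite F \<and> F \<subseteq> G \<and> p = (\<Sum>g\<in>F. r g * g)}"

definition colon :: "('v, 'k::comm_ring_1) mpoly set \<Rightarrow> ('v, 'k) mpoly \<Rightarrow> ('v, 'k) mpoly set" where
  "colon I f = {g. g * f \<in> I}"

definition radical :: "('v, 'k::comm_ring_1) mpoly set \<Rightarrow> ('v, 'k) mpoly set" where
  "radical I = {g. \<exists>m::nat. g ^ m \<in> I}"

definition assoc_radical :: "('v, 'k::comm_ring_1) mpoly set \<Rightarrow> ('v, 'k) mpoly set \<Rightarrow> bool" where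
  "assoc_radical I K \<longleftrightarrow> (\<exists>a. monom a \<notin> I \<and> K = radical (colon I (monom a)))"

definition weighted_edge_ideal ::
  "('v \<Rightarrow> 'v \<Rightarrow> bool) \<Rightarrow> ('v \<Rightarrow> 'v \<Rightarrow> nat) \<Rightarrow> ('v, 'k::comm_ring_1) mpoly set" where
  "weighted_edge_ideal E w =
     ideal_gen {monom (Poly_Mapping.single i (w i j) + Poly_Mapping.single j (w i j)) | i j. E i j}"

end

theory Submission
  imports Defs
begin
lemma ideal_gen_add: "p \<in> ideal_gen G \<Longrightarrow> q \<in> ideal_gen G \<Longrightarrow> p + q \<in> ideal_gen G"
proof -
  assume "p \<in> ideal_gen G" "q \<in> ideal_gen G"
  then obtain F r F' r' where F: "finite F" "F \<subseteq> G" "p = (\<Sum>g\<in>F. r g * g)"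
    and F': "finite F'" "F' \<subseteq> G" "q = (\<Sum>g\<in>F'. r' g * g)" unfolding ideal_gen_def mem_Collect_eq by (elim exE conjE) 
  define s where "s g = (if g \<in> F then r g else 0) + (if g \<in> F' then r' g else 0)" for g
  have 1: "p = (\<Sum>g\<in>F \<union> F'. (if g \<in> F then r g else 0) * g)"
    unfolding F(3) by (rule sum.mono_neutral_cong_left) (simp_all add: F F')
  have 2: "q = (\<Sum>g\<in>F \<union> F'. (if g \<in> F' then r' g else 0) * g)"
    unfolding F'(3) by (rule sum.mono_neutral_cong_left) (simp_all add: F F')
  have "p + q = (\<Sum>g\<in>F \<union> F'. s g * g)" unfolding 1 2 s_def
    by (simp only: sum.distrib[symmetric] distrib_right)
  moreover have "finite (F \<union> F')" "F \<union> F' \<subseteq> G" using F F' by simp_all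
  ultimately show ?thesis unfolding ideal_gen_def mem_Collect_eq by (intro exI conjI)
qed

lemma ideal_gen_0: "0 \<in> ideal_gen G"
  unfolding ideal_gen_def by (rule CollectI, rule exI[of _ "{}"]) simp

lemma ideal_gen_gen: "g \<in> G \<Longrightarrow> g \<in> ideal_gen G"
  unfolding ideal_gen_def by (rule CollectI, rule exI[of _ "{g}"], rule exI[of _ "\<lambda>_. 1"]) simp

lemma ideal_gen_mult: "p \<in> ideal_gen G \<Longrightarrow> c * p \<in> ideal_gen G"
proof -
  assume "p \<in> ideal_gen G"
  then obtain F r where F: "finite F" "F \<subseteq> G" "p = (\<Sum>g\<in>F. r g * g)" unfolding ideal_gen_def mem_Collect_eq by (elim exE conjE) 
  have "c * p = (\<Sum>g\<in>F. (c * r g) * g)" unfolding F(3) sum_distrib_left by (simp only: mult.assoc)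
  then show ?thesis using F unfolding ideal_gen_def mem_Collect_eq by (intro exI conjI)
qed

lemma ideal_gen_sum: "finite A \<Longrightarrow> (\<And>x. x \<in> A \<Longrightarrow> f x \<in> ideal_gen G) \<Longrightarrow> sum f A \<in> ideal_gen G"
proof (induction A rule: finite_induct)
  case empty
  then show ?case by (simp add: ideal_gen_0)
next
  case (insert x F)
  then show ?case by (simp add: ideal_gen_add)
qed

lemma pm_expand: "p = (\<Sum>s\<in>Poly_Mapping.keys p. Poly_Mapping.single s (Poly_Mapping.lookup p s))"
proof (rule poly_mapping_eqI)
  fix k
  have "Poly_Mapping.lookup (\<Sum>s\<in>Poly_Mapping.keys p. Poly_Mapping.single s (Poly_Mapping.lookup p s)) k = (\<Sum>s\<in>Poly_Mapping.keys p. (if k = s then Poly_Mapping.lookup p s else 0))"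
    unfolding lookup_sum lookup_single when_def by (simp only: eq_commute)
  also have "\<dots> = Poly_Mapping.lookup p k" by (simp add: in_keys_iff)
  finally show "Poly_Mapping.lookup p k = Poly_Mapping.lookup (\<Sum>s\<in>Poly_Mapping.keys p. Poly_Mapping.single s (Poly_Mapping.lookup p s)) k" by simp
qed

lemma mult_monom_expand: "p * monom u = (\<Sum>s\<in>Poly_Mapping.keys p. Poly_Mapping.single (s + u) (Poly_Mapping.lookup p s :: 'k::comm_ring_1))"
  apply (subst pm_expand[of p]) 
  by (simp add: sum_distrib_right monom_def mult_single)

lemma lookup_mult_monom: "Poly_Mapping.lookup (p * monom u) (t + u) = (Poly_Mapping.lookup p t :: 'k::comm_ring_1)"
proof -
  have "Poly_Mapping.lookup (p * monom u) (t + u) = (\<Sum>s\<in>Poly_Mapping.keys p. (if t = s then Poly_Mapping.lookup p s else 0))"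
    unfolding mult_monom_expand lookup_sum lookup_single when_def by simp
  also have "\<dots> = Poly_Mapping.lookup p t" by (simp add: in_keys_iff)
  finally show ?thesis .
qed

lemma keys_mult_monom: "s \<in> Poly_Mapping.keys (p * monom u) \<Longrightarrow> \<exists>t. s = t + u"
  using keys_mult[of p "monom u"] by (auto simp: monom_def)


lemma ideal_gen_keys:
  assumes "p \<in> ideal_gen (monom ` Gs :: ('v, 'k::comm_ring_1) mpoly set)" "s \<in> Poly_Mapping.keys p"
  shows "\<exists>g\<in>Gs. \<forall>k. Poly_Mapping.lookup g k \<le> Poly_Mapping.lookup s k"
proof -
  obtain F r where F: "finite F" "F \<subseteq> monom ` Gs" "p = (\<Sum>h\<in>F. r h * h)"
    using assms(1) unfolding ideal_gen_def mem_Collect_eq by (elim exE conjE) 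
  have "s \<in> (\<Union>h\<in>F. Poly_Mapping.keys (r h * h))"
    using assms(2) keys_sum[of "\<lambda>h. r h * h" F] F(3) by blast
  then obtain h where h: "h \<in> F" "s \<in> Poly_Mapping.keys (r h * h)" by blast
  then obtain g where g: "g \<in> Gs" "h = monom g" using F(2) by blast
  obtain t where "s = t + g" using keys_mult_monom[of s "r h" g] h g by blast
  then have "\<forall>k. Poly_Mapping.lookup g k \<le> Poly_Mapping.lookup s k" by (simp add: lookup_add)
  then show ?thesis using g by blast
qed

lemma ideal_gen_of_keys:
  assumes "\<And>s. s \<in> Poly_Mapping.keys p \<Longrightarrow> monom s \<in> ideal_gen X"
  shows "(p :: ('v, 'k::comm_ring_1) mpoly) \<in> ideal_gen X"
proof -
  have "p = (\<Sum>s\<in>Poly_Mapping.keys p. Poly_Mapping.single 0 (Poly_Mapping.lookup p s) * monom s)"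
    by (subst pm_expand[of p]) (simp add: monom_def mult_single)
  also have "\<dots> \<in> ideal_gen X"
    by (rule ideal_gen_sum) (simp_all add: assms ideal_gen_mult)
  finally show ?thesis .
qed

lemma monom_in_ideal_gen:
  assumes "g \<in> Gs" "\<forall>k. Poly_Mapping.lookup g k \<le> Poly_Mapping.lookup s k"
  shows "monom s \<in> ideal_gen (monom ` Gs :: ('v, 'k::comm_ring_1) mpoly set)"
proof -
  have "s = (s - g) + g"
    by (rule poly_mapping_eqI) (simp add: lookup_add lookup_minus assms(2))
  then have "monom s = monom (s - g) * (monom g :: ('v, 'k) mpoly)"
    by (metis monom_def mult_single mult_1)
  also have "\<dots> \<in> ideal_gen (monom ` Gs)"
    by (rule ideal_gen_mult, rule ideal_gen_gen) (use assms(1) in simp)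
  finally show ?thesis .
qed

lemma saturation:
  assumes "p * monom u \<in> ideal_gen (monom ` Gs :: ('v, 'k::comm_ring_1) mpoly set)"
    and "\<And>s g. g \<in> Gs \<Longrightarrow> \<forall>k. Poly_Mapping.lookup g k \<le> Poly_Mapping.lookup (s + u) k
            \<Longrightarrow> \<forall>k. Poly_Mapping.lookup g k \<le> Poly_Mapping.lookup (s + v) k"
  shows "p * monom v \<in> ideal_gen (monom ` Gs)"
proof (rule ideal_gen_of_keys)
  fix s' assume s': "s' \<in> Poly_Mapping.keys (p * monom v)"
  then obtain t where t: "s' = t + v" using keys_mult_monom by blast
  have "Poly_Mapping.lookup p t \<noteq> 0" using s' unfolding t in_keys_iff lookup_mult_monom .
  then have "t + u \<in> Poly_Mapping.keys (p * monom u)" unfolding in_keys_iff lookup_mult_monom .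
  then obtain g where "g \<in> Gs" "\<forall>k. Poly_Mapping.lookup g k \<le> Poly_Mapping.lookup (t + u) k"
    using ideal_gen_keys assms(1) by blast
  then show "monom s' \<in> ideal_gen (monom ` Gs)"
    using assms(2) monom_in_ideal_gen t by blast
qed


lemma monom_add: "monom (x + y) = (monom x * monom y :: ('v, 'k::comm_ring_1) mpoly)"
  by (simp add: monom_def mult_single)

lemma monom_pow: "monom b ^ n = (monom (\<Sum>_<n. b) :: ('v, 'k::comm_ring_1) mpoly)"
proof (induction n)
  case 0
  then show ?case by (simp add: monom_def one_poly_mapping_def)
next
  case (Suc n)
  then show ?case by (simp add: monom_add mult.commute)
qed

theorem lemma2p14:
  fixes E :: "'v::finite \<Rightarrow> 'v \<Rightarrow> bool"
    and w :: "'v \<Rightarrow> 'v \<Rightarrow> nat"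
    and a :: "'v \<Rightarrow>\<^sub>0 nat"
    and K :: "('v, 'k::field) mpoly set"
  assumes E_sym: "\<And>i j. E i j \<Longrightarrow> E j i"
    and E_irrefl: "\<And>i. \<not> E i i"
    and w_sym: "\<And>i j. E i j \<Longrightarrow> w i j = w j i"
    and w_pos: "\<And>i j. E i j \<Longrightarrow> w i j > 0"
    and a_notin: "monom a \<notin> (weighted_edge_ideal E w :: ('v, 'k) mpoly set)"
    and K_assoc: "assoc_radical (radical (colon (weighted_edge_ideal E w) (monom a))) K"
  shows "assoc_radical (weighted_edge_ideal E w) K"
proof -
  define I where "I = (weighted_edge_ideal E w :: ('v, 'k) mpoly set)"
  define Gs where "Gs = {Poly_Mapping.single i (w i j) + Poly_Mapping.single j (w i j) | i j. E i j}"
  have I_eq: "I = ideal_gen (monom ` Gs)"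
    unfolding I_def weighted_edge_ideal_def Gs_def by (rule arg_cong[where f=ideal_gen]) blast
  define S where "S = (\<Sum>i\<in>UNIV. \<Sum>j\<in>UNIV. w i j)"
  define N where "N = Suc (2 * S)"
  have g_bound: "Poly_Mapping.lookup g k \<le> 2 * S" if gG: "g \<in> Gs" for g k
  proof -
    obtain i j where g: "g = Poly_Mapping.single i (w i j) + Poly_Mapping.single j (w i j)"
      using gG unfolding Gs_def by blast
    have "w i j \<le> (\<Sum>j\<in>UNIV. w i j)" by (rule member_le_sum) simp_all
    also have "\<dots> \<le> S" unfolding S_def by (rule member_le_sum[where f="\<lambda>i. \<Sum>j\<in>UNIV. w i j"]) simp_all
    finally have "w i j \<le> S" .
    moreover have "Poly_Mapping.lookup g k \<le> w i j + w i j"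
      unfolding g lookup_add by (intro add_mono) (simp_all add: lookup_single when_def)
    ultimately show ?thesis by simp
  qed
  define J where "J = radical (colon I (monom a))"
  obtain b where b_notin: "monom b \<notin> J" and K_eq: "K = radical (colon J (monom b))"
    using K_assoc unfolding assoc_radical_def J_def I_def by blast
  define c where "c = a + (\<Sum>_<N. b)"
  have mc: "monom c = monom a * monom b ^ N" unfolding c_def monom_add monom_pow ..
  have sat: "p * monom c \<in> I" if "p * (monom a * monom b ^ l) \<in> I" for p l
  proof -
    have "p * monom (a + (\<Sum>_<l. b)) \<in> ideal_gen (monom ` Gs)"
      using that unfolding I_eq monom_add monom_pow .
    then have "p * monom c \<in> ideal_gen (monom ` Gs)"
    proof (rule saturation)
      fix s g assume g: "g \<in> Gs" and le: "\<forall>k. Poly_Mapping.lookup g k \<le> Poly_Mapping.lookup (s + (a + (\<Sum>_<l. b))) k"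
      show "\<forall>k. Poly_Mapping.lookup g k \<le> Poly_Mapping.lookup (s + c) k"
      proof
        fix k
        show "Poly_Mapping.lookup g k \<le> Poly_Mapping.lookup (s + c) k"
        proof (cases "Poly_Mapping.lookup b k = 0")
          case True
          then show ?thesis using le[rule_format, of k] by (simp add: c_def lookup_add lookup_sum)
        next
          case False
          then have "N \<le> N * Poly_Mapping.lookup b k" by simp
          moreover have "Poly_Mapping.lookup g k \<le> 2 * S" using g_bound g by blast
          ultimately show ?thesis by (simp add: c_def lookup_add lookup_sum N_def)
        qed
      qed
    qed
    then show ?thesis unfolding I_eq .
  qed
  have I_mult: "x * y \<in> I" if "y \<in> I" for x y
    using that unfolding I_eq by (rule ideal_gen_mult)
  show ?thesis
    unfolding assoc_radical_def I_def[symmetric]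
  proof (intro exI conjI)
    show "monom c \<notin> I"
    proof
      assume "monom c \<in> I"
      then have "monom b ^ N * monom a \<in> I" unfolding mc by (simp add: mult.commute)
      then have "monom b \<in> J" unfolding J_def radical_def colon_def by blast
      then show False using b_notin by blast
    qed
    show "K = radical (colon I (monom c))"
    proof (rule set_eqI)
      fix f
      have "f \<in> K \<longleftrightarrow> (\<exists>m l. (f ^ m * monom b) ^ l * monom a \<in> I)"
        unfolding K_eq J_def radical_def colon_def by simp
      also have "\<dots> \<longleftrightarrow> (\<exists>m. f ^ m * monom c \<in> I)"
      proof
        assume "\<exists>m l. (f ^ m * monom b) ^ l * monom a \<in> I"
        then obtain m l where "(f ^ m * monom b) ^ l * monom a \<in> I" by blast
        then have "(f ^ m) ^ l * (monom a * monom b ^ l) \<in> I"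
          by (simp add: power_mult_distrib mult_ac)
        then have "(f ^ m) ^ l * monom c \<in> I" by (rule sat)
        then have "f ^ (m * l) * monom c \<in> I" by (simp only: power_mult)
        then show "\<exists>m. f ^ m * monom c \<in> I" by blast
      next
        assume "\<exists>m. f ^ m * monom c \<in> I"
        then obtain m where m: "f ^ m * monom c \<in> I" by blast
        have "(f ^ m * monom b) ^ N * monom a = (f ^ m) ^ (2 * S) * (f ^ m * monom c)"
          unfolding mc N_def by (simp add: power_mult_distrib power_mult mult_ac power_add)
        also have "\<dots> \<in> I" using m by (rule I_mult)
        finally show "\<exists>m l. (f ^ m * monom b) ^ l * monom a \<in> I" by blast
      qed
      also have "\<dots> \<longleftrightarrow> f \<in> radical (colon I (monom c))"
        unfolding radical_def colon_def by simp
      finally show "f \<in> K \<longleftrightarrow> f \<in> radical (colon I (monom c))" .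
    qed
  qed
qed

end
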